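(* Let $c$ be a prime of the form $2^r\cdot 3+1$ ($r\ge1$), and let $a,b>1$ be integers with $a,b,c$ pairwise coprime and $e_c(b)=3$. Suppose positive integers $z,Y,Z$ with $z\le Z$ and $Y\equiv 4\pmod 6$ satisfy $a+b=c^z$ and $a+b^Y=c^Z$, and let $e=\nu_c((Y-1)/3)$. Then $Z\ge 2z-2e$.
   Context: For a positive integer $M$ and an integer $A$ coprime to $M$, $e_M(A)$ denotes the least positive integer $e$ such that $A^e\equiv \pm1\pmod M$. $\nu_c$ is the $c$-adic valuation. *)

theory Defs
  imports "HOL-Number_Theory.Number_Theory"
begin

text \<open>e_M(A): least positive e with A^e = +-1 (mod M), for A coprime to M.\<close>
definition pm_order :: "nat \<Rightarrow> int \<Rightarrow> nat" where
  "pm_order M A = (LEAST e. e > 0 \<and> ([A ^ e = 1] (mod int M) \<or> [A ^ e = -1] (mod int M)))"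

end

theory Submission imports Defs begin

lemma pow_lin: "((x::int) - 1)^2 dvd x^t - 1 - int t * (x - 1)"
proof (induction t)
  case 0 then show ?case by simp
next
  case (Suc t)
  have e: "x^(Suc t) - 1 - int (Suc t) * (x - 1) = x * (x^t - 1 - int t * (x - 1)) + int t * (x-1)^2"
    by (simp add: algebra_simps power2_eq_square)
  show ?case unfolding e using Suc by (simp add: dvd_add)
qed

lemma twice_sum: "2 * (\<Sum>t<n. int t) = int n * (int n - 1)"
  by (induction n) (auto simp: algebra_simps)

lemma lemA:
  fixes p x :: int and m j :: nat
  assumes "prime p" "[x = 1] (mod p)" "\<not> p dvd int m" "p^j dvd x^m - 1"
  shows "p^j dvd x - 1"
proof -
  have S: "[(\<Sum>t<m. x^t) = (\<Sum>t<m. 1)] (mod p)"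
    by (intro cong_sum) (metis assms(2) cong_pow power_one)
  hence "[(\<Sum>t<m. x^t) = int m] (mod p)" by simp
  hence "\<not> p dvd (\<Sum>t<m. x^t)" using assms(3) cong_dvd_iff by blast
  hence "coprime (p^j) (\<Sum>t<m. x^t)" using assms(1)
    by (simp add: prime_imp_coprime)
  moreover have "p^j dvd (x - 1) * (\<Sum>t<m. x^t)" using assms(4) power_diff_1_eq[of x m] by simp
  ultimately show ?thesis using coprime_dvd_mult_left_iff by blast
qed

lemma lemB:
  fixes p x :: int and i :: nat
  assumes "prime p" "odd p" "[x = 1] (mod p)" "p^(Suc i) dvd x^(nat p) - 1"
  shows "p^i dvd x - 1"
proof -
  define S where "S = (\<Sum>t<nat p. x^t)"
  have p0: "p > 0" using assms(1) prime_gt_0_int by blast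
  have px: "p dvd x - 1" using assms(3) by (metis cong_iff_dvd_diff cong_sym)
  obtain h where h: "p = 2*h+1" using assms(2) oddE by blast
  have "S - p = (\<Sum>t<nat p. x^t - 1)" using p0 by (simp add: S_def sum_subtractf)
  also have "\<dots> = (\<Sum>t<nat p. (x^t - 1 - int t*(x-1)) + (x-1)*int t)"
    by (rule sum.cong) (auto simp: algebra_simps)
  also have "\<dots> = (\<Sum>t<nat p. (x^t - 1 - int t * (x - 1))) + (x - 1) * (\<Sum>t<nat p. int t)"
    by (simp only: sum.distrib sum_distrib_left)
  finally have e1: "S - p = (\<Sum>t<nat p. (x^t - 1 - int t * (x - 1))) + (x - 1) * (\<Sum>t<nat p. int t)" .
  have e2: "(x-1)^2 dvd (\<Sum>t<nat p. (x^t - 1 - int t * (x - 1)))"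
    by (intro dvd_sum pow_lin)
  have e3: "p^2 dvd (x-1)^2" using px by simp
  have e4: "(\<Sum>t<nat p. int t) = p * h"
    using twice_sum[of "nat p"] p0 h by (simp add: algebra_simps)
  have e5: "p^2 dvd (x - 1) * (p * h)" using px by (simp add: power2_eq_square mult_dvd_mono)
  have "p^2 dvd (\<Sum>t<nat p. (x^t - 1 - int t * (x - 1)))" using e2 e3 dvd_trans by blast
  hence "p^2 dvd S - p" unfolding e1 e4 using e5 by (rule dvd_add)
  then obtain q where q: "S - p = p^2 * q" by blast
  have Sq: "S = p * (1 + p*q)" using q by (simp add: algebra_simps power2_eq_square)
  have "x^(nat p) - 1 = (x-1) * S" unfolding S_def by (rule power_diff_1_eq)
  hence "x^(nat p) - 1 = p * ((x-1) * (1 + p*q))" using Sq by simp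
  hence "p * p^i dvd p * ((x-1) * (1 + p*q))" using assms(4) by simp
  hence d: "p^i dvd (x-1) * (1 + p*q)" using p0 by simp
  have "\<not> p dvd 1 + p*q"
  proof
    assume "p dvd 1 + p*q"
    hence "p dvd 1 + p*q - p*q" by (rule dvd_diff) simp
    hence "p dvd 1" by simp
    hence "p \<le> 1" by (rule zdvd_imp_le) simp
    thus False using prime_gt_1_int[OF assms(1)] by simp
  qed
  hence "coprime (p^i) (1 + p*q)" using assms(1) by (simp add: prime_imp_coprime)
  thus ?thesis using d coprime_dvd_mult_left_iff by blast
qed

lemma lemC:
  fixes p x :: int and j s :: nat
  assumes "prime p" "odd p" "[x = 1] (mod p)" "p^(j+s) dvd x^(nat p ^ s) - 1"
  shows "p^j dvd x - 1"
  using assms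
proof (induction s arbitrary: x j)
  case 0 then show ?case by simp
next
  case (Suc s)
  have x1: "[x^(nat p) = 1] (mod p)" using Suc.prems(3) by (metis cong_pow power_one)
  have "(x^(nat p))^(nat p ^ s) = x^(nat p ^ Suc s)"
    by (simp add: power_mult[symmetric] mult.commute)
  hence "p^(Suc j + s) dvd (x^(nat p))^(nat p ^ s) - 1" using Suc.prems(4) by simp
  hence "p^(Suc j) dvd x^(nat p) - 1" using Suc.IH[OF Suc.prems(1,2) x1] by blast
  thus ?case using lemB Suc.prems by blast
qed

theorem mainTheorem10:
  fixes a b c r z Y Z :: nat
  assumes "prime c" and "r \<ge> 1" and "c = 2 ^ r * 3 + 1"
    and "a > 1" and "b > 1"
    and "coprime a b" and "coprime b c" and "coprime a c"
    and "pm_order c (int b) = 3"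
    and "z > 0" and "Y > 0" and "Z > 0" and "z \<le> Z"
    and "[Y = 4] (mod 6)"
    and "a + b = c ^ z" and "a + b ^ Y = c ^ Z"
  shows "int Z \<ge> 2 * int z - 2 * int (multiplicity c ((Y - 1) div 3))"
proof -
  define B where "B = int b"
  define C where "C = int c"
  define A where "A = int a"
  define k where "k = (Y - 1) div 3"
  define e where "e = multiplicity c k"
  have "2 ^ r \<ge> (2::nat) ^ 1" using assms(2) by (intro power_increasing) auto
  hence c7: "c \<ge> 7" using assms(3) by simp
  have "even ((2::nat) ^ r)" using assms(2) by simp
  hence codd: "odd c" using assms(3) by simp
  have Cp: "prime C" using assms(1) C_def by simp
  have Codd: "odd C" using codd C_def by simp
  have C7: "C \<ge> 7" using c7 C_def by simp
  have B2: "B \<ge> 2" using assms(5) B_def by simp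
  define P where "P = (\<lambda>e::nat. e > 0 \<and> ([B ^ e = 1] (mod C) \<or> [B ^ e = -1] (mod C)))"
  have po: "pm_order c B = (LEAST e. P e)" unfolding pm_order_def P_def C_def by simp
  have "\<not> c dvd b"
  proof
    assume "c dvd b"
    hence "is_unit c" using assms(7) coprime_common_divisor[of b c c] by simp
    thus False using assms(1) not_prime_unit by blast
  qed
  hence "[b ^ (c - 1) = 1] (mod c)" using fermat_theorem assms(1) by blast
  hence "[B ^ (c - 1) = 1] (mod C)" unfolding B_def C_def
    by (metis cong_int_iff of_nat_1 of_nat_power)
  hence "P (c - 1)" unfolding P_def using c7 by simp
  hence P3: "P 3" using po assms(9) B_def by (metis LeastI)
  have "\<not> P 1" using po assms(9) B_def not_less_Least[of 1 P] by simp
  hence nB1: "\<not> [B = 1] (mod C)" unfolding P_def by simp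
  have Ymod: "Y mod 6 = 4" using assms(14) by (simp add: cong_def)
  have Yk: "Y - 1 = 3 * k" unfolding k_def using Ymod by presburger
  have kodd: "odd k" unfolding k_def using Ymod by presburger
  have eqA: "A + B = C ^ z" using assms(15) unfolding A_def B_def C_def by (metis of_nat_add of_nat_power)
  have eqB: "A + B ^ Y = C ^ Z" using assms(16) unfolding A_def B_def C_def by (metis of_nat_add of_nat_power)
  have "B * (B ^ (Y - 1) - 1) = C ^ z * (C ^ (Z - z) - 1)"
  proof -
    have "B * (B ^ (Y - 1) - 1) = B ^ Y - B" using assms(11)
      by (simp add: algebra_simps power_Suc[symmetric])
    also have "\<dots> = C ^ Z - C ^ z" using eqA eqB by simp
    also have "\<dots> = C ^ z * (C ^ (Z - z) - 1)" using assms(13)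
      by (simp add: algebra_simps power_add[symmetric])
    finally show ?thesis .
  qed
  hence "C ^ z dvd B * (B ^ (Y - 1) - 1)" by simp
  moreover have "coprime (C ^ z) B" using assms(7) unfolding B_def C_def
    by (simp add: coprime_commute)
  ultimately have dz: "C ^ z dvd B ^ (3 * k) - 1" using coprime_dvd_mult_right_iff Yk by metis
  have B3: "[B ^ 3 = 1] (mod C)"
  proof (rule ccontr)
    assume "\<not> [B ^ 3 = 1] (mod C)"
    hence m1: "[B ^ 3 = -1] (mod C)" using P3 unfolding P_def by simp
    have "[(B ^ 3) ^ k = (-1) ^ k] (mod C)" using m1 by (rule cong_pow)
    hence "[B ^ (3 * k) = -1] (mod C)" using kodd by (simp add: power_mult)
    moreover have "C dvd B ^ (3 * k) - 1" using dz assms(10)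
      by (meson dvd_trans dvd_power order_refl)
    hence "[B ^ (3 * k) = 1] (mod C)" by (simp add: cong_iff_dvd_diff cong_sym_eq)
    ultimately have "[-1 = 1] (mod C)" by (metis cong_sym cong_trans)
    hence "C dvd 2" by (simp add: cong_iff_dvd_diff)
    hence "C \<le> 2" by (rule zdvd_imp_le) simp
    thus False using C7 by simp
  qed
  show ?thesis
  proof (cases "z \<le> e")
    case True
    then show ?thesis unfolding k_def[symmetric] e_def[symmetric] by simp
  next
    case False
    define j where "j = z - e"
    have zj: "z = j + e" using False j_def by simp
    have k0: "k \<noteq> 0" using kodd by (metis even_zero)
    obtain m where m: "k = c ^ e * m" "\<not> c dvd m" using multiplicity_decompose'[of k c] e_def k0 not_prime_unit assms(1) by metis
    define X where "X = (B ^ 3) ^ (c ^ e)"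
    have X1: "[X = 1] (mod C)" unfolding X_def using B3 by (metis cong_pow power_one)
    have "B ^ (3 * k) = X ^ m" unfolding X_def m(1) by (simp add: power_mult)
    hence "C ^ z dvd X ^ m - 1" using dz by simp
    moreover have "\<not> C dvd int m" using m(2) C_def by simp
    ultimately have "C ^ z dvd X - 1" using lemA[OF Cp X1] by blast
    hence "C ^ (j + e) dvd (B ^ 3) ^ (nat C ^ e) - 1" using zj X_def C_def by simp
    hence dj: "C ^ j dvd B ^ 3 - 1" using lemC[OF Cp Codd B3] by blast
    have "B ^ 3 - 1 = (B ^ 2 + B + 1) * (B - 1)" by (simp add: algebra_simps power2_eq_square power3_eq_cube)
    moreover have "\<not> C dvd B - 1" using nB1 by (simp add: cong_iff_dvd_diff)
    hence "coprime (C ^ j) (B - 1)" using Cp by (simp add: prime_imp_coprime)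
    ultimately have "C ^ j dvd B ^ 2 + B + 1" using dj coprime_dvd_mult_left_iff by metis
    hence Cj: "C ^ j \<le> B ^ 2 + B + 1" using B2 by (intro zdvd_imp_le) auto
    have "Z \<ge> 2 * j"
    proof (rule ccontr)
      assume "\<not> Z \<ge> 2 * j"
      hence "Z + 1 \<le> 2 * j" by simp
      hence "C ^ (Z + 1) \<le> C ^ (2 * j)" using C7 by (intro power_increasing) auto
      also have "\<dots> = (C ^ j) ^ 2" by (simp add: power_mult[symmetric] mult.commute)
      also have "\<dots> \<le> (B ^ 2 + B + 1) ^ 2" using Cj C7 by (intro power_mono) auto
      also have "\<dots> < (2 * B ^ 2) ^ 2"
      proof -
        have "2 * B \<le> B * B" using B2 mult_right_mono[of 2 B B] by simp
        hence "B + 1 < B * B" using B2 by linarith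
        hence "B ^ 2 + B + 1 < 2 * B ^ 2" by (simp add: power2_eq_square)
        thus ?thesis using B2 by (intro power_strict_mono) auto
      qed
      also have "\<dots> = 4 * B ^ 4" by (simp add: power_mult_distrib)
      also have "\<dots> \<le> C * B ^ Y"
      proof -
        have "Y \<ge> 4" using Ymod by presburger
        hence "B ^ 4 \<le> B ^ Y" using B2 by (intro power_increasing) auto
        moreover have "B ^ 4 \<ge> 0" by simp
        ultimately show ?thesis using C7 by (intro mult_mono) auto
      qed
      also have "\<dots> < C * C ^ Z"
      proof -
        have "A > 0" using assms(4) A_def by simp
        hence "B ^ Y < C ^ Z" using eqB by simp
        thus ?thesis using C7 by simp
      qed
      finally show False by simp
    qed
    then show ?thesis unfolding k_def[symmetric] e_def[symmetric] using j_def False by simp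
  qed
qed

end
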